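(* Let $G=(V,E)$ be a directed graph, $s\neq t$ vertices and $k\ge 2$ an integer. For any simple path $p^*(s,t)$ from $s$ to $t$ of length $l\le k$, its first two edges and its last two edges are definite edges.
   Context: A path from $x$ to $y$ in $G$ is a vertex sequence $x=v_0,\dots,v_m=y$ with $(v_{i-1},v_i)\in E$; its length is $m$ and $V(p)$ is its vertex set. A simple path has no repeated vertex. For a vertex $u$ and integer $l\ge 0$, $EV^*_l(s,u)$ exists iff there is at least one simple path from $s$ to $u$ of length at most $l$ not containing $t$, and then $EV^*_l(s,u)$ is the intersection of $V(p)$ over all such paths. Symmetrically, $EV^*_l(v,t)$ exists iff there is at least one simple path from $v$ to $t$ of length at most $l$ not containing $s$, and then it is the intersection of $V(p)$ over all such paths. An edge $e(u,v)\in E$ is a definite edge (for $s,t,k$) if at least one of the following holds: (a) $u=s$ and $EV^*_{k-1}(v,t)$ exists; (b) $v=t$ and $EV^*_{k-1}(s,u)$ exists; (c) $EV^*_1(s,u)$ and $EV^*_{k-2}(v,t)$ exist and $u\notin EV^*_{k-2}(v,t)$; (d) $EV^*_1(v,t)$ and $EV^*_{k-2}(s,u)$ exist and $v\notin EV^*_{k-2}(s,u)$. *)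

theory Defs
  imports Main
begin

definition is_path :: "('a \<times> 'a) set \<Rightarrow> 'a list \<Rightarrow> 'a \<Rightarrow> 'a \<Rightarrow> bool" where
  "is_path E p x y \<longleftrightarrow> p \<noteq> [] \<and> hd p = x \<and> last p = y \<and>
     (\<forall>i. Suc i < length p \<longrightarrow> (p ! i, p ! Suc i) \<in> E)"

definition path_len :: "'a list \<Rightarrow> nat" where
  "path_len p = length p - 1"

definition simple_path :: "('a \<times> 'a) set \<Rightarrow> 'a list \<Rightarrow> 'a \<Rightarrow> 'a \<Rightarrow> bool" where
  "simple_path E p x y \<longleftrightarrow> is_path E p x y \<and> distinct p"

definition EVs_paths :: "('a \<times> 'a) set \<Rightarrow> 'a \<Rightarrow> 'a \<Rightarrow> nat \<Rightarrow> 'a \<Rightarrow> 'a list set" where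
  "EVs_paths E s t l u = {p. simple_path E p s u \<and> path_len p \<le> l \<and> t \<notin> set p}"

definition EVs_exists :: "('a \<times> 'a) set \<Rightarrow> 'a \<Rightarrow> 'a \<Rightarrow> nat \<Rightarrow> 'a \<Rightarrow> bool" where
  "EVs_exists E s t l u \<longleftrightarrow> EVs_paths E s t l u \<noteq> {}"

definition EVs :: "('a \<times> 'a) set \<Rightarrow> 'a \<Rightarrow> 'a \<Rightarrow> nat \<Rightarrow> 'a \<Rightarrow> 'a set" where
  "EVs E s t l u = (\<Inter>p \<in> EVs_paths E s t l u. set p)"

definition EVt_paths :: "('a \<times> 'a) set \<Rightarrow> 'a \<Rightarrow> 'a \<Rightarrow> nat \<Rightarrow> 'a \<Rightarrow> 'a list set" where
  "EVt_paths E s t l v = {p. simple_path E p v t \<and> path_len p \<le> l \<and> s \<notin> set p}"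

definition EVt_exists :: "('a \<times> 'a) set \<Rightarrow> 'a \<Rightarrow> 'a \<Rightarrow> nat \<Rightarrow> 'a \<Rightarrow> bool" where
  "EVt_exists E s t l v \<longleftrightarrow> EVt_paths E s t l v \<noteq> {}"

definition EVt :: "('a \<times> 'a) set \<Rightarrow> 'a \<Rightarrow> 'a \<Rightarrow> nat \<Rightarrow> 'a \<Rightarrow> 'a set" where
  "EVt E s t l v = (\<Inter>p \<in> EVt_paths E s t l v. set p)"

definition definite_edge :: "('a \<times> 'a) set \<Rightarrow> 'a \<Rightarrow> 'a \<Rightarrow> nat \<Rightarrow> 'a \<Rightarrow> 'a \<Rightarrow> bool" where
  "definite_edge E s t k u v \<longleftrightarrow> (u, v) \<in> E \<and>
     ((u = s \<and> EVt_exists E s t (k - 1) v) \<or>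
      (v = t \<and> EVs_exists E s t (k - 1) u) \<or>
      (EVs_exists E s t 1 u \<and> EVt_exists E s t (k - 2) v \<and> u \<notin> EVt E s t (k - 2) v) \<or>
      (EVt_exists E s t 1 v \<and> EVs_exists E s t (k - 2) u \<and> v \<notin> EVs E s t (k - 2) u))"

end

theory Submission
  imports Defs
begin

lemma sp_drop:
  assumes "simple_path E p x y" "j < length p"
  shows "simple_path E (drop j p) (p!j) y"
  using assms unfolding simple_path_def is_path_def
  by (auto simp: hd_drop_conv_nth last_drop)

lemma sp_take:
  assumes "simple_path E p x y" "j < length p"
  shows "simple_path E (take (Suc j) p) x (p!j)"
proof -
  have l: "last (take (Suc j) p) = p!j" using assms(2)
    by (simp add: take_Suc_conv_app_nth)
  show ?thesis using assms l unfolding simple_path_def is_path_def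
    by (auto simp: hd_take)
qed

lemma sp_two:
  assumes "(a,b) \<in> E" "a \<noteq> b"
  shows "simple_path E [a,b] a b"
  using assms unfolding simple_path_def is_path_def
  by (auto simp: less_Suc_eq)

theorem theorem4p9:
  fixes V :: "'a set" and E :: "('a \<times> 'a) set" and s t :: 'a and k :: nat and p :: "'a list"
  assumes "E \<subseteq> V \<times> V" and "s \<in> V" and "t \<in> V" and "s \<noteq> t" and "k \<ge> 2"
    and "simple_path E p s t" and "path_len p \<le> k"
  shows "\<forall>i. Suc i < length p \<and> (i < 2 \<or> length p \<le> i + 3) \<longrightarrow>
           definite_edge E s t k (p ! i) (p ! Suc i)"
proof (intro allI impI)
  fix i assume hi: "Suc i < length p \<and> (i < 2 \<or> length p \<le> i + 3)"
  have sp: "simple_path E p s t" by fact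
  have ne: "p \<noteq> []" and h0: "p!0 = s" and hl: "p ! (length p - 1) = t"
    and dist: "distinct p" and edges: "\<And>j. Suc j < length p \<Longrightarrow> (p!j, p!Suc j) \<in> E"
    using sp unfolding simple_path_def is_path_def
    by (auto simp: hd_conv_nth last_conv_nth)
  have nthe: "\<And>a b. a < length p \<Longrightarrow> b < length p \<Longrightarrow> (p!a = p!b) = (a = b)"
    using dist by (simp add: nth_eq_iff_index_eq)
  have sset: "\<And>j. j < length p \<Longrightarrow> (s \<in> set (drop j p)) = (j = 0)"
  proof -
    fix j assume j: "j < length p"
    have "(s \<in> set (drop j p)) = (\<exists>m<length p - j. p ! (j + m) = s)"
      by (auto simp: in_set_conv_nth)
    also have "\<dots> = (j = 0)" using j ne h0 nthe[of _ 0] by (auto; metis add_is_0 less_diff_conv add.commute)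
    finally show "(s \<in> set (drop j p)) = (j = 0)" .
  qed
  have tset: "\<And>j. j < length p \<Longrightarrow> (t \<in> set (take (Suc j) p)) = (j = length p - 1)"
  proof -
    fix j assume j: "j < length p"
    have "(t \<in> set (take (Suc j) p)) = (\<exists>m. m < Suc j \<and> p ! m = t)"
      using j by (auto simp: in_set_conv_nth)
    also have "\<dots> = (j = length p - 1)" using j ne hl nthe[of _ "length p - 1"]
      by (auto; metis less_antisym not_less_eq le_less_trans less_Suc_eq_le diff_Suc_1 Suc_pred length_greater_0_conv)
    finally show "(t \<in> set (take (Suc j) p)) = (j = length p - 1)" .
  qed
  have notin_drop: "\<And>a j. a < j \<Longrightarrow> j < length p \<Longrightarrow> p!a \<notin> set (drop j p)"
  proof
    fix a j assume a: "a < j" "j < length p" "p!a \<in> set (drop j p)"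
    then obtain m where "m < length p - j" "p!(j+m) = p!a" by (auto simp: in_set_conv_nth)
    then show False using nthe[of "j+m" a] a by auto
  qed
  have notin_take: "\<And>a j. j < a \<Longrightarrow> a < length p \<Longrightarrow> p!a \<notin> set (take (Suc j) p)"
  proof
    fix a j assume a: "j < a" "a < length p" "p!a \<in> set (take (Suc j) p)"
    then obtain m where "m < Suc j" "p!m = p!a" by (auto simp: in_set_conv_nth)
    then show False using nthe[of m a] a by auto
  qed
  have plen: "length p - 1 \<le> k" using assms(7) by (simp add: path_len_def)
  have Ei: "(p!i, p!Suc i) \<in> E" using edges hi by auto
  have EVt_ex: "\<And>j l. 0 < j \<Longrightarrow> j < length p \<Longrightarrow> length p - 1 - j \<le> l \<Longrightarrow> EVt_exists E s t l (p!j)"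
  proof -
    fix j l assume "0 < j" "j < length p" "length p - 1 - j \<le> l"
    hence "drop j p \<in> EVt_paths E s t l (p!j)"
      using sp_drop[OF sp] sset unfolding EVt_paths_def path_len_def by auto
    thus "EVt_exists E s t l (p!j)" unfolding EVt_exists_def by auto
  qed
  have EVs_ex: "\<And>j l. j < length p - 1 \<Longrightarrow> j \<le> l \<Longrightarrow> EVs_exists E s t l (p!j)"
  proof -
    fix j l assume "j < length p - 1" "j \<le> l"
    hence "take (Suc j) p \<in> EVs_paths E s t l (p!j)"
      using sp_take[OF sp, of j] tset[of j] unfolding EVs_paths_def path_len_def by auto
    thus "EVs_exists E s t l (p!j)" unfolding EVs_exists_def by auto
  qed
  show "definite_edge E s t k (p ! i) (p ! Suc i)"
  proof (cases "i = 0")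
    case True
    then show ?thesis unfolding definite_edge_def using Ei h0 EVt_ex[of 1 "k-1"] hi plen by auto
  next
    case i0: False
    show ?thesis
    proof (cases "Suc i = length p - 1")
      case True
      then show ?thesis unfolding definite_edge_def using Ei hl EVs_ex[of i "k-1"] hi plen by auto
    next
      case iN: False
      show ?thesis
      proof (cases "i = 1")
        case True
        have e1: "EVs_exists E s t 1 (p!1)"
        proof -
          have "(s, p!1) \<in> E" using edges[of 0] hi h0 True by auto
          moreover have "s \<noteq> p!1" using nthe[of 0 1] h0 hi True by force
          moreover have "t \<noteq> p!1" proof -
            have "length p - 1 < length p" using ne by simp
            moreover have "1 \<noteq> length p - 1" using hi True by linarith
            ultimately show ?thesis using nthe[of 1 "length p - 1"] hl hi True by simp
          qed
          ultimately have "[s, p!1] \<in> EVs_paths E s t 1 (p!1)"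
            using sp_two assms(4) unfolding EVs_paths_def path_len_def by auto
          thus ?thesis unfolding EVs_exists_def by auto
        qed
        have e2: "EVt_exists E s t (k-2) (p!2)" using EVt_ex[of 2 "k-2"] hi True plen by auto
        have "drop 2 p \<in> EVt_paths E s t (k-2) (p!2)"
          using sp_drop[OF sp, of 2] sset[of 2] hi True plen unfolding EVt_paths_def path_len_def by auto
        hence "EVt E s t (k-2) (p!2) \<subseteq> set (drop 2 p)" unfolding EVt_def by auto
        moreover have "p!1 \<notin> set (drop 2 p)" using notin_drop[of 1 2] hi True by auto
        ultimately show ?thesis unfolding definite_edge_def using Ei e1 e2 True
          by (auto simp: numeral_2_eq_2)
      next
        case i1: False
        hence ii: "Suc (Suc i) = length p - 1" using hi i0 iN by auto
        have e1: "EVt_exists E s t 1 (p!Suc i)"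
        proof -
          have "(p!Suc i, t) \<in> E" using edges[of "Suc i"] hi hl ii by auto
          moreover have "t \<noteq> p!Suc i" proof -
            have "length p - 1 < length p" using ne by simp
            then show ?thesis using nthe[of "Suc i" "length p - 1"] hl ii hi by simp
          qed
          moreover have "s \<noteq> p!Suc i" using nthe[of 0 "Suc i"] h0 hi ne by simp
          ultimately have "[p!Suc i, t] \<in> EVt_paths E s t 1 (p!Suc i)"
            using sp_two[of "p!Suc i" t E] assms(4) unfolding EVt_paths_def path_len_def by (auto simp: eq_commute[of t])
          thus ?thesis unfolding EVt_exists_def by auto
        qed
        have e2: "EVs_exists E s t (k-2) (p!i)" using EVs_ex[of i "k-2"] ii plen by auto
        have "take (Suc i) p \<in> EVs_paths E s t (k-2) (p!i)"
          using sp_take[OF sp, of i] tset[of i] hi ii plen unfolding EVs_paths_def path_len_def by auto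
        hence "EVs E s t (k-2) (p!i) \<subseteq> set (take (Suc i) p)" unfolding EVs_def by auto
        moreover have "p!Suc i \<notin> set (take (Suc i) p)" using notin_take[of i "Suc i"] hi by auto
        ultimately show ?thesis unfolding definite_edge_def using Ei e1 e2 by auto
      qed
    qed
  qed
qed

end
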